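(* Let $X$ be a CAT(0) cube complex and $v,w$ vertices of $X$. Root $X$ at $v$ and identify $X$ with $X_P$, where $P=P(X,v)$ is the associated poset with inconsistent pairs. Then the vertex $w$ corresponds to a consistent order ideal $Q$ of $P$, and the vertices of the interval $X[v,w]$ correspond exactly to the order ideals of $Q$ (with the order induced from $P$). In particular, $X[v,w]\cong X_Q$, where $Q$ is regarded as a poset with no inconsistent pairs.
   Context: Hyperplanes: in a cube complex, call two edges of a cube equivalent if they are parallel in that cube, and extend transitively to an equivalence relation on all edges of $X$; each equivalence class determines a hyperplane (the union of the midcubes of the cubes orthogonal to those edges). For a rooted CAT(0) cube complex $(X,v)$, the poset with inconsistent pairs $P(X,v)$ has as elements the hyperplanes of $X$; $i<j$ if, starting from $v$, every edge path must cross hyperplane $i$ before crossing hyperplane $j$; and $\{i,j\}$ is inconsistent if no vertex of $X$ is separated from $v$ by both $i$ and $j$. The vertex $x$ of $X$ is identified with the set of hyperplanes separating $x$ from $v$; these sets are exactly the consistent order ideals of $P$, and this identifies $X$ with the cube complex $X_P$ (vertices = consistent order ideals; a cube $C(I,M)$ for each consistent order ideal $I$ and $M\subseteq I_{\max}$, with vertices $I\setminus S$, $S\subseteq M$). A poset with inconsistent pairs is a locally finite poset of finite width with a set of pairs $\{p,q\}$ such that inconsistent pairs have no common upper bound and pairs above inconsistent pairs are inconsistent. The interval $X[v,w]$ is the subcomplex of $X$ consisting of all cubes all of whose vertices lie on at least one edge geodesic (shortest path in the 1-skeleton) between $v$ and $w$. *)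

theory Defs
  imports Main
begin

definition antichain :: "('a \<Rightarrow> 'a \<Rightarrow> bool) \<Rightarrow> 'a set \<Rightarrow> bool" where
  "antichain le A \<longleftrightarrow> (\<forall>x\<in>A. \<forall>y\<in>A. le x y \<longrightarrow> x = y)"

definition pip :: "'a set \<Rightarrow> ('a \<Rightarrow> 'a \<Rightarrow> bool) \<Rightarrow> ('a \<Rightarrow> 'a \<Rightarrow> bool) \<Rightarrow> bool" where
  "pip E le inc \<longleftrightarrow>
     (\<forall>x\<in>E. le x x) \<and>
     (\<forall>x\<in>E. \<forall>y\<in>E. le x y \<and> le y x \<longrightarrow> x = y) \<and>
     (\<forall>x\<in>E. \<forall>y\<in>E. \<forall>z\<in>E. le x y \<and> le y z \<longrightarrow> le x z) \<and>
     (\<forall>x\<in>E. \<forall>y\<in>E. finite {z\<in>E. le x z \<and> le z y}) \<and>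
     (\<exists>n::nat. \<forall>A. A \<subseteq> E \<and> antichain le A \<longrightarrow> finite A \<and> card A \<le> n) \<and>
     (\<forall>p q. inc p q \<longrightarrow> p \<in> E \<and> q \<in> E) \<and>
     (\<forall>p q. inc p q \<longrightarrow> inc q p) \<and>
     (\<forall>p q. inc p q \<longrightarrow> \<not> (\<exists>r\<in>E. le p r \<and> le q r)) \<and>
     (\<forall>p q p' q'. inc p q \<and> p' \<in> E \<and> q' \<in> E \<and> le p p' \<and> le q q' \<longrightarrow> inc p' q')"

definition order_ideal :: "'a set \<Rightarrow> ('a \<Rightarrow> 'a \<Rightarrow> bool) \<Rightarrow> 'a set \<Rightarrow> bool" where
  "order_ideal E le I \<longleftrightarrow> I \<subseteq> E \<and> (\<forall>x\<in>I. \<forall>y\<in>E. le y x \<longrightarrow> y \<in> I)"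

definition consistent :: "('a \<Rightarrow> 'a \<Rightarrow> bool) \<Rightarrow> 'a set \<Rightarrow> bool" where
  "consistent inc I \<longleftrightarrow> (\<forall>x\<in>I. \<forall>y\<in>I. \<not> inc x y)"

definition vertices :: "'a set \<Rightarrow> ('a \<Rightarrow> 'a \<Rightarrow> bool) \<Rightarrow> ('a \<Rightarrow> 'a \<Rightarrow> bool) \<Rightarrow> 'a set set" where
  "vertices E le inc = {I. finite I \<and> order_ideal E le I \<and> consistent inc I}"

definition maxs :: "('a \<Rightarrow> 'a \<Rightarrow> bool) \<Rightarrow> 'a set \<Rightarrow> 'a set" where
  "maxs le I = {m\<in>I. \<forall>x\<in>I. le m x \<longrightarrow> x = m}"

text \<open>The cube C(I,M), represented by its set of vertices.\<close>
definition cube_verts :: "'a set \<Rightarrow> 'a set \<Rightarrow> 'a set set" where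
  "cube_verts I M = {I - S | S. S \<subseteq> M}"

definition cubes :: "'a set \<Rightarrow> ('a \<Rightarrow> 'a \<Rightarrow> bool) \<Rightarrow> ('a \<Rightarrow> 'a \<Rightarrow> bool) \<Rightarrow> 'a set set set" where
  "cubes E le inc = {cube_verts I M | I M. I \<in> vertices E le inc \<and> M \<subseteq> maxs le I}"

definition adjacent :: "'a set \<Rightarrow> ('a \<Rightarrow> 'a \<Rightarrow> bool) \<Rightarrow> ('a \<Rightarrow> 'a \<Rightarrow> bool) \<Rightarrow> 'a set \<Rightarrow> 'a set \<Rightarrow> bool" where
  "adjacent E le inc I J \<longleftrightarrow>
     (I \<in> vertices E le inc \<and> (\<exists>m\<in>maxs le I. J = I - {m})) \<or>
     (J \<in> vertices E le inc \<and> (\<exists>m\<in>maxs le J. I = J - {m}))"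

definition edge_path :: "'a set \<Rightarrow> ('a \<Rightarrow> 'a \<Rightarrow> bool) \<Rightarrow> ('a \<Rightarrow> 'a \<Rightarrow> bool) \<Rightarrow> 'a set list \<Rightarrow> bool" where
  "edge_path E le inc p \<longleftrightarrow> p \<noteq> [] \<and> set p \<subseteq> vertices E le inc \<and>
     (\<forall>i. Suc i < length p \<longrightarrow> adjacent E le inc (p ! i) (p ! Suc i))"

definition geodesic :: "'a set \<Rightarrow> ('a \<Rightarrow> 'a \<Rightarrow> bool) \<Rightarrow> ('a \<Rightarrow> 'a \<Rightarrow> bool) \<Rightarrow> 'a set list \<Rightarrow> 'a set \<Rightarrow> 'a set \<Rightarrow> bool" where
  "geodesic E le inc p a b \<longleftrightarrow> edge_path E le inc p \<and> hd p = a \<and> last p = b \<and>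
     (\<forall>q. edge_path E le inc q \<and> hd q = a \<and> last q = b \<longrightarrow> length p \<le> length q)"

definition on_geodesic :: "'a set \<Rightarrow> ('a \<Rightarrow> 'a \<Rightarrow> bool) \<Rightarrow> ('a \<Rightarrow> 'a \<Rightarrow> bool) \<Rightarrow> 'a set \<Rightarrow> 'a set \<Rightarrow> 'a set set" where
  "on_geodesic E le inc a b = {x. \<exists>p. geodesic E le inc p a b \<and> x \<in> set p}"

definition interval_cubes :: "'a set \<Rightarrow> ('a \<Rightarrow> 'a \<Rightarrow> bool) \<Rightarrow> ('a \<Rightarrow> 'a \<Rightarrow> bool) \<Rightarrow> 'a set \<Rightarrow> 'a set \<Rightarrow> 'a set set set" where
  "interval_cubes E le inc a b = {C \<in> cubes E le inc. C \<subseteq> on_geodesic E le inc a b}"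

definition interval_vertices :: "'a set \<Rightarrow> ('a \<Rightarrow> 'a \<Rightarrow> bool) \<Rightarrow> ('a \<Rightarrow> 'a \<Rightarrow> bool) \<Rightarrow> 'a set \<Rightarrow> 'a set \<Rightarrow> 'a set set" where
  "interval_vertices E le inc a b = {x. {x} \<in> interval_cubes E le inc a b}"

end

theory Submission
  imports Defs
begin

definition dd :: "'a set \<Rightarrow> 'a set \<Rightarrow> nat" where
  "dd a b = card (a - b) + card (b - a)"

lemma adjacent_sym: "adjacent E le inc I J \<Longrightarrow> adjacent E le inc J I"
  unfolding adjacent_def by blast

lemma card_ins_le: "finite A \<Longrightarrow> card (insert m A) \<le> Suc (card A)"
  by (simp add: card_insert_if)

lemma adj_dd:
  assumes "adjacent E le inc x y" "finite x" "finite y" "finite b"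
  shows "dd x b \<le> Suc (dd y b)"
proof -
  from assms(1) obtain m where "(y = x - {m} \<and> m \<in> x) \<or> (x = y - {m} \<and> m \<in> y)"
    unfolding adjacent_def maxs_def by blast
  then show ?thesis
  proof
    assume h: "y = x - {m} \<and> m \<in> x"
    have "card (x - b) \<le> card (insert m (y - b))" apply (rule card_mono) using assms h by auto
    also have "\<dots> \<le> Suc (card (y - b))" using assms by (simp add: card_ins_le)
    finally have 1: "card (x - b) \<le> Suc (card (y - b))" .
    have 2: "card (b - x) \<le> card (b - y)" apply (rule card_mono) using assms h by auto
    show ?thesis using 1 2 unfolding dd_def by simp
  next
    assume h: "x = y - {m} \<and> m \<in> y"
    have "card (b - x) \<le> card (insert m (b - y))" apply (rule card_mono) using assms h by auto
    also have "\<dots> \<le> Suc (card (b - y))" using assms by (simp add: card_ins_le)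
    finally have 1: "card (b - x) \<le> Suc (card (b - y))" .
    have 2: "card (x - b) \<le> card (y - b)" apply (rule card_mono) using assms h by auto
    show ?thesis using 1 2 unfolding dd_def by simp
  qed
qed

lemma edge_path_Cons:
  assumes h: "edge_path E le inc (x # y # r)"
  shows "edge_path E le inc (y # r) \<and> adjacent E le inc x y"
proof -
  have a: "\<forall>i. Suc i < length (x#y#r) \<longrightarrow> adjacent E le inc ((x#y#r)!i) ((x#y#r)!Suc i)"
    using h by (simp add: edge_path_def)
  have "adjacent E le inc x y" using a[rule_format, of 0] by simp
  moreover have "Suc i < length (y#r) \<Longrightarrow> adjacent E le inc ((y#r)!i) ((y#r)!Suc i)" for i
    using a[rule_format, of "Suc i"] by simp
  ultimately show ?thesis using h by (auto simp: edge_path_def)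
qed

lemma lb: "edge_path E le inc p \<Longrightarrow> dd (hd p) (last p) + 1 \<le> length p"
proof (induction p rule: induct_list012)
  case 1 thus ?case by (simp add: edge_path_def)
next
  case (2 x) thus ?case by (simp add: dd_def)
next
  case (3 x y r)
  have e: "edge_path E le inc (y # r)" "adjacent E le inc x y" using edge_path_Cons[OF "3.prems"] by auto
  have s: "set (x#y#r) \<subseteq> vertices E le inc" using "3.prems" by (simp add: edge_path_def)
  have "last (y#r) \<in> set (x#y#r)" using last_in_set[of "y#r"] by auto
  hence fin: "finite x" "finite y" "finite (last (y#r))" using s by (auto simp: vertices_def)
  have "dd x (last (y#r)) \<le> Suc (dd y (last (y#r)))" by (rule adj_dd[OF e(2) fin])
  with "3.IH"(2)[OF e(1)] show ?case by simp
qed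

lemma edge_path_take: "edge_path E le inc p \<Longrightarrow> i < length p \<Longrightarrow> edge_path E le inc (take (Suc i) p)"
  unfolding edge_path_def by (auto dest: in_set_takeD)

lemma edge_path_drop: "edge_path E le inc p \<Longrightarrow> i < length p \<Longrightarrow> edge_path E le inc (drop i p)"
  unfolding edge_path_def by (auto dest: in_set_dropD simp: add.commute)

lemma edge_path_rev:
  assumes "edge_path E le inc p" shows "edge_path E le inc (rev p)"
  unfolding edge_path_def
proof (intro conjI allI impI)
  show "rev p \<noteq> []" using assms by (simp add: edge_path_def)
  show "set (rev p) \<subseteq> vertices E le inc" using assms by (simp add: edge_path_def)
  fix i assume i: "Suc i < length (rev p)"
  define j where "j = length p - Suc (Suc i)"
  have "Suc j < length p" using i by (simp add: j_def)
  hence "adjacent E le inc (p!j) (p!Suc j)" using assms by (simp add: edge_path_def)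
  moreover have "rev p ! i = p ! Suc j" using i by (simp add: rev_nth j_def Suc_diff_Suc)
  moreover have "rev p ! Suc i = p ! j" using i by (simp add: rev_nth j_def)
  ultimately show "adjacent E le inc (rev p ! i) (rev p ! Suc i)" by (simp add: adjacent_sym)
qed

lemma exists_max:
  assumes "finite A" "A \<noteq> {}" "A \<subseteq> E" and anti: "\<forall>x\<in>E. \<forall>y\<in>E. le x y \<and> le y x \<longrightarrow> x = y"
    and tr: "\<forall>x\<in>E. \<forall>y\<in>E. \<forall>z\<in>E. le x y \<and> le y z \<longrightarrow> le x z"
  shows "\<exists>m\<in>A. \<forall>x\<in>A. le m x \<longrightarrow> x = m"
  using assms(1,2,3)
proof (induction A rule: finite_ne_induct)
  case (singleton x) thus ?case by auto
next
  case (insert a A)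
  then obtain m where m: "m \<in> A" "\<forall>x\<in>A. le m x \<longrightarrow> x = m" by auto
  have aE: "a \<in> E" and AE: "A \<subseteq> E" using insert.prems by auto
  show ?case
  proof (cases "le m a")
    case True
    have "\<forall>x\<in>insert a A. le a x \<longrightarrow> x = a"
    proof (intro ballI impI)
      fix x assume x: "x \<in> insert a A" "le a x"
      show "x = a"
      proof (cases "x = a")
        case False
        hence xA: "x \<in> A" using x by auto
        have mE: "m \<in> E" and xE: "x \<in> E" using m(1) xA AE by auto
        have "le m x" using tr[rule_format, OF mE aE xE] True x(2) by simp
        hence "x = m" using m(2) xA by auto
        thus ?thesis using anti[rule_format, OF mE aE] True x(2) by simp
      qed simp
    qed
    thus ?thesis by blast
  next
    case False
    thus ?thesis using m by auto
  qed
qed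

lemma remove_max: "I \<in> vertices E le inc \<Longrightarrow> S \<subseteq> maxs le I \<Longrightarrow> I - S \<in> vertices E le inc"
  unfolding vertices_def order_ideal_def consistent_def maxs_def by blast

lemma edge_path_ConsI:
  assumes "edge_path E le inc p" "adjacent E le inc x (hd p)" "x \<in> vertices E le inc"
  shows "edge_path E le inc (x # p)"
  unfolding edge_path_def
proof (intro conjI allI impI)
  show "x # p \<noteq> []" by simp
  show "set (x#p) \<subseteq> vertices E le inc" using assms by (auto simp: edge_path_def)
  fix i assume i: "Suc i < length (x # p)"
  show "adjacent E le inc ((x # p) ! i) ((x # p) ! Suc i)"
  proof (cases i)
    case 0 thus ?thesis using assms by (auto simp: edge_path_def hd_conv_nth)
  next
    case (Suc j) thus ?thesis using assms i by (auto simp: edge_path_def)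
  qed
qed


lemma down_path:
  assumes pip: "pip E le inc"
  shows "card (J - I) = n \<Longrightarrow> J \<in> vertices E le inc \<Longrightarrow> order_ideal E le I \<Longrightarrow>
    order_ideal E le K \<Longrightarrow> I \<subseteq> K \<Longrightarrow> K \<subseteq> J \<Longrightarrow>
    \<exists>p. edge_path E le inc p \<and> hd p = J \<and> last p = I \<and> K \<in> set p \<and> length p = n + 1"
proof (induction n arbitrary: J K)
  case 0
  have "finite J" using "0.prems" by (simp add: vertices_def)
  hence "J = I" using "0.prems" by auto
  hence "K = J" using "0.prems" by auto
  have "edge_path E le inc [J]" using "0.prems" by (simp add: edge_path_def)
  thus ?case using \<open>J = I\<close> \<open>K = J\<close> by (intro exI[of _ "[J]"]) auto
next
  case (Suc n)
  have fJ: "finite J" and JE: "J \<subseteq> E" using Suc.prems(2) by (simp_all add: vertices_def order_ideal_def)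
  define A where "A = (if K = J then J - I else J - K)"
  have AJI: "A \<subseteq> J - I" using Suc.prems(5) by (auto simp: A_def)
  have "J - I \<noteq> {}" using Suc.prems(1) by (metis card.empty nat.simps(3))
  hence neA: "A \<noteq> {}" using Suc.prems(6) by (auto simp: A_def)
  have finA: "finite A" and AE: "A \<subseteq> E" using AJI fJ JE by (auto intro: finite_subset)
  have anti: "\<forall>x\<in>E. \<forall>y\<in>E. le x y \<and> le y x \<longrightarrow> x = y"
    using pip unfolding pip_def by (elim conjE)
  have tr: "\<forall>x\<in>E. \<forall>y\<in>E. \<forall>z\<in>E. le x y \<and> le y z \<longrightarrow> le x z"
    using pip unfolding pip_def by (elim conjE)
  obtain m where m: "m \<in> A" "\<forall>x\<in>A. le m x \<longrightarrow> x = m"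
    using exists_max[OF finA neA AE anti tr] by blast
  have mJ: "m \<in> maxs le J"
    unfolding maxs_def
  proof (intro CollectI conjI ballI impI)
    show "m \<in> J" using m AJI by auto
    fix x assume x: "x \<in> J" "le m x"
    show "x = m"
    proof (cases "K = J")
      case True
      have "x \<notin> I"
      proof
        assume "x \<in> I"
        moreover have "m \<in> E" using JE \<open>m \<in> J\<close> by auto
        ultimately have "m \<in> I" using Suc.prems(3) x(2) \<open>x \<in> I\<close> unfolding order_ideal_def by (meson)
        thus False using m AJI by auto
      qed
      thus ?thesis using m x True by (auto simp: A_def)
    next
      case False
      have "x \<notin> K"
      proof
        assume "x \<in> K"
        moreover have "m \<in> E" using JE \<open>m \<in> J\<close> by auto
        ultimately have "m \<in> K" using Suc.prems(4) x(2) \<open>x \<in> K\<close> unfolding order_ideal_def by (meson)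
        thus False using m False by (auto simp: A_def)
      qed
      thus ?thesis using m x False by (auto simp: A_def)
    qed
  qed
  define J' where "J' = J - {m}"
  have J'v: "J' \<in> vertices E le inc" unfolding J'_def using remove_max[OF Suc.prems(2), of "{m}"] mJ by auto
  have eq: "J' - I = (J - I) - {m}" unfolding J'_def by blast
  have "m \<in> J - I" using m AJI by auto
  hence "card (J' - I) = n" using Suc.prems(1) fJ unfolding eq by (simp add: card_Diff_singleton)
  define K' where "K' = (if K = J then J' else K)"
  have mK: "K \<noteq> J \<Longrightarrow> m \<notin> K" using m(1) by (simp add: A_def)
  have oK': "order_ideal E le K'" using J'v Suc.prems(4) by (simp add: K'_def vertices_def)
  have IK': "I \<subseteq> K'" using Suc.prems(5,6) \<open>m \<in> J - I\<close> by (auto simp: K'_def J'_def)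
  have K'J': "K' \<subseteq> J'" using Suc.prems(6) mK by (auto simp: K'_def J'_def)
  obtain p where p: "edge_path E le inc p" "hd p = J'" "last p = I" "K' \<in> set p"
    "length p = n + 1"
    using Suc.IH[OF \<open>card (J' - I) = n\<close> J'v Suc.prems(3) oK' IK' K'J'] by blast
  have "m \<in> J" using \<open>m \<in> J - I\<close> by simp
  have adj: "adjacent E le inc J (hd p)" unfolding p(2) J'_def adjacent_def
    apply (rule disjI1) using mJ Suc.prems(2) by blast
  have ep: "edge_path E le inc (J # p)" by (rule edge_path_ConsI[OF p(1) adj Suc.prems(2)])
  have "p \<noteq> []" using p(1) by (simp add: edge_path_def)
  have "K \<in> set (J # p)"
  proof (cases "K = J")
    case False thus ?thesis using p(4) by (simp add: K'_def)
  qed simp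
  moreover have "last (J # p) = I" using p(3) \<open>p \<noteq> []\<close> by simp
  ultimately show ?case using ep p(5) by (intro exI[of _ "J # p"]) simp
qed

lemma ideal_Q:
  assumes "Q \<in> vertices E le inc"
  shows "order_ideal Q le I \<longleftrightarrow> I \<in> vertices E le inc \<and> I \<subseteq> Q"
proof
  assume h: "order_ideal Q le I"
  have "finite Q" "order_ideal E le Q" "consistent inc Q" using assms by (auto simp: vertices_def)
  note qq = this
  have IQ: "I \<subseteq> Q" using h by (simp add: order_ideal_def)
  have fI: "finite I" using IQ qq(1) by (rule finite_subset)
  have QE: "Q \<subseteq> E" using qq(2) by (simp add: order_ideal_def)
  have oI: "order_ideal E le I" unfolding order_ideal_def
  proof (intro conjI ballI impI)
    show "I \<subseteq> E" using IQ QE by blast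
    fix x y assume xy: "x \<in> I" "y \<in> E" "le y x"
    have "y \<in> Q" using qq(2) xy IQ unfolding order_ideal_def by blast
    thus "y \<in> I" using h xy unfolding order_ideal_def by blast
  qed
  have cI: "consistent inc I" using qq(3) IQ unfolding consistent_def by blast
  show "I \<in> vertices E le inc \<and> I \<subseteq> Q" using fI oI cI IQ by (simp add: vertices_def)
next
  assume "I \<in> vertices E le inc \<and> I \<subseteq> Q"
  thus "order_ideal Q le I" using assms unfolding vertices_def order_ideal_def by blast
qed

lemma path_through:
  assumes pip: "pip E le inc" and Q: "Q \<in> vertices E le inc" and x: "x \<in> vertices E le inc" "x \<subseteq> Q"
  shows "\<exists>p. edge_path E le inc p \<and> hd p = {} \<and> last p = Q \<and> x \<in> set p \<and> length p = card Q + 1"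
proof -
  have "\<exists>p. edge_path E le inc p \<and> hd p = Q \<and> last p = {} \<and> x \<in> set p \<and> length p = card Q + 1"
    apply (rule down_path[OF pip])
    using Q x by (auto simp: vertices_def order_ideal_def)
  then obtain p where p: "edge_path E le inc p" "hd p = Q" "last p = {}" "x \<in> set p" "length p = card Q + 1"
    by blast
  have "p \<noteq> []" using p(1) by (simp add: edge_path_def)
  thus ?thesis using p edge_path_rev[OF p(1)]
    by (intro exI[of _ "rev p"]) (auto simp: hd_rev last_rev)
qed

lemma geo_char:
  assumes pip: "pip E le inc" and Q: "Q \<in> vertices E le inc"
  shows "on_geodesic E le inc {} Q = {x \<in> vertices E le inc. x \<subseteq> Q}"
proof
  have fQ: "finite Q" using Q by (simp add: vertices_def)
  show "on_geodesic E le inc {} Q \<subseteq> {x \<in> vertices E le inc. x \<subseteq> Q}"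
  proof
    fix x assume "x \<in> on_geodesic E le inc {} Q"
    then obtain p where g: "geodesic E le inc p {} Q" and xp: "x \<in> set p"
      unfolding on_geodesic_def by blast
    have ep: "edge_path E le inc p" "hd p = {}" "last p = Q" using g by (auto simp: geodesic_def)
    have xv: "x \<in> vertices E le inc" using ep(1) xp by (auto simp: edge_path_def)
    hence fx: "finite x" by (simp add: vertices_def)
    obtain q where q: "edge_path E le inc q" "hd q = {}" "last q = Q" "length q = card Q + 1"
      using path_through[OF pip Q, of "{}"] Q by (auto simp: vertices_def order_ideal_def consistent_def)
    have len: "length p \<le> card Q + 1" using g q unfolding geodesic_def by metis
    obtain i where i: "i < length p" "x = p ! i" using xp by (auto simp: in_set_conv_nth)
    have "p \<noteq> []" using ep by (simp add: edge_path_def)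
    have 1: "dd (hd (take (Suc i) p)) (last (take (Suc i) p)) + 1 \<le> length (take (Suc i) p)"
      by (rule lb[OF edge_path_take[OF ep(1) i(1)]])
    have "hd (take (Suc i) p) = {}" using ep(2) \<open>p \<noteq> []\<close> by (simp add: hd_conv_nth)
    moreover have "last (take (Suc i) p) = x" using i by (simp add: take_Suc_conv_app_nth)
    ultimately have a: "card x + 1 \<le> Suc i" using 1 i by (simp add: dd_def min_def split: if_splits)
    have 2: "dd (hd (drop i p)) (last (drop i p)) + 1 \<le> length (drop i p)"
      by (rule lb[OF edge_path_drop[OF ep(1) i(1)]])
    have "hd (drop i p) = x" using i by (simp add: hd_drop_conv_nth)
    moreover have "last (drop i p) = Q" using i ep by (simp add: last_drop)
    ultimately have b: "card (x - Q) + card (Q - x) + 1 \<le> length p - i" using 2 by (simp add: dd_def)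
    have c1: "card x = card (x \<inter> Q) + card (x - Q)" by (rule card_Int_Diff[OF fx])
    have c2: "card Q = card (Q \<inter> x) + card (Q - x)" by (rule card_Int_Diff[OF fQ])
    have c3: "card Q = card (x \<inter> Q) + card (Q - x)" using c2 by (simp add: Int_commute)
    have "card (x - Q) = 0" using a b c1 c3 len i(1) by linarith
    hence "x - Q = {}" using fx by simp
    thus "x \<in> {x \<in> vertices E le inc. x \<subseteq> Q}" using xv by auto
  qed
  show "{x \<in> vertices E le inc. x \<subseteq> Q} \<subseteq> on_geodesic E le inc {} Q"
  proof
    fix x assume "x \<in> {x \<in> vertices E le inc. x \<subseteq> Q}"
    then obtain p where p: "edge_path E le inc p" "hd p = {}" "last p = Q" "x \<in> set p" "length p = card Q + 1"
      using path_through[OF pip Q] by blast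
    have "geodesic E le inc p {} Q"
      unfolding geodesic_def
    proof (intro conjI allI impI)
      fix q assume "edge_path E le inc q \<and> hd q = {} \<and> last q = Q"
      thus "length p \<le> length q" using lb[of E le inc q] p by (simp add: dd_def)
    qed (use p in auto)
    thus "x \<in> on_geodesic E le inc {} Q" using p unfolding on_geodesic_def by blast
  qed
qed

lemma cube_verts_props:
  assumes "I \<in> vertices E le inc" "M \<subseteq> maxs le I"
  shows "cube_verts I M \<subseteq> vertices E le inc" "I \<in> cube_verts I M" "\<forall>y\<in>cube_verts I M. y \<subseteq> I"
proof -
  show "cube_verts I M \<subseteq> vertices E le inc"
    unfolding cube_verts_def using remove_max[OF assms(1)] assms(2) by blast
  show "I \<in> cube_verts I M" unfolding cube_verts_def by blast
  show "\<forall>y\<in>cube_verts I M. y \<subseteq> I" unfolding cube_verts_def by blast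
qed

lemma singleton_cube: "{x} \<in> cubes E le inc \<longleftrightarrow> x \<in> vertices E le inc"
proof
  assume "{x} \<in> cubes E le inc"
  then obtain I M where h: "{x} = cube_verts I M" "I \<in> vertices E le inc" "M \<subseteq> maxs le I"
    unfolding cubes_def by blast
  have "I \<in> cube_verts I M" unfolding cube_verts_def by blast
  hence "I \<in> {x}" using h(1) by (simp only:)
  hence "I = x" by simp
  thus "x \<in> vertices E le inc" using h(2) by simp
next
  assume xv: "x \<in> vertices E le inc"
  have c: "cube_verts x {} = {x}" unfolding cube_verts_def by auto
  have "cube_verts x {} \<in> cubes E le inc" unfolding cubes_def
    apply (rule CollectI) apply (rule exI[of _ x]) apply (rule exI[of _ "{}"]) using xv by simp
  thus "{x} \<in> cubes E le inc" by (simp only: c)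
qed

lemma vertsQ: "Q \<in> vertices E le inc \<Longrightarrow> vertices Q le (\<lambda>_ _. False) = {I. I \<in> vertices E le inc \<and> I \<subseteq> Q}"
proof -
  assume Q: "Q \<in> vertices E le inc"
  have "finite Q" using Q by (simp add: vertices_def)
  show ?thesis
  proof (rule set_eqI)
    fix I
    have "I \<in> vertices Q le (\<lambda>_ _. False) \<longleftrightarrow> finite I \<and> order_ideal Q le I"
      by (simp add: vertices_def consistent_def)
    also have "\<dots> \<longleftrightarrow> finite I \<and> I \<in> vertices E le inc \<and> I \<subseteq> Q" by (simp only: ideal_Q[OF Q])
    also have "\<dots> \<longleftrightarrow> I \<in> vertices E le inc \<and> I \<subseteq> Q" by (auto simp: vertices_def)
    finally show "I \<in> vertices Q le (\<lambda>_ _. False) \<longleftrightarrow> I \<in> {I. I \<in> vertices E le inc \<and> I \<subseteq> Q}" by simp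
  qed
qed

theorem lemma3p2:
  fixes E :: "'a set" and le inc :: "'a \<Rightarrow> 'a \<Rightarrow> bool" and Q :: "'a set"
  assumes "pip E le inc"
    and "Q \<in> vertices E le inc"
  shows "interval_vertices E le inc {} Q = {I. order_ideal Q le I} \<and>
         interval_cubes E le inc {} Q = cubes Q le (\<lambda>_ _. False)"
proof
  note G = geo_char[OF assms]
  show "interval_vertices E le inc {} Q = {I. order_ideal Q le I}"
    unfolding interval_vertices_def interval_cubes_def G
    using ideal_Q[OF assms(2)] by (auto simp: singleton_cube)
  show "interval_cubes E le inc {} Q = cubes Q le (\<lambda>_ _. False)"
  proof
    show "interval_cubes E le inc {} Q \<subseteq> cubes Q le (\<lambda>_ _. False)"
    proof
      fix C assume "C \<in> interval_cubes E le inc {} Q"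
      then obtain I M where h: "C = cube_verts I M" "I \<in> vertices E le inc" "M \<subseteq> maxs le I"
        and sub: "C \<subseteq> {x \<in> vertices E le inc. x \<subseteq> Q}"
        unfolding interval_cubes_def cubes_def G by blast
      have "I \<subseteq> Q" using cube_verts_props(2)[OF h(2,3)] h(1) sub by auto
      hence "I \<in> vertices Q le (\<lambda>_ _. False)" using vertsQ[OF assms(2)] h by auto
      thus "C \<in> cubes Q le (\<lambda>_ _. False)" using h unfolding cubes_def by blast
    qed
    show "cubes Q le (\<lambda>_ _. False) \<subseteq> interval_cubes E le inc {} Q"
    proof
      fix C assume "C \<in> cubes Q le (\<lambda>_ _. False)"
      then obtain I M where h: "C = cube_verts I M" "I \<in> vertices Q le (\<lambda>_ _. False)" "M \<subseteq> maxs le I"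
        unfolding cubes_def by blast
      have I: "I \<in> vertices E le inc" "I \<subseteq> Q" using h(2) vertsQ[OF assms(2)] by auto
      have "C \<in> cubes E le inc" using h I unfolding cubes_def by blast
      moreover have "C \<subseteq> {x \<in> vertices E le inc. x \<subseteq> Q}"
        using cube_verts_props[OF I(1) h(3)] h(1) I(2) by blast
      ultimately show "C \<in> interval_cubes E le inc {} Q" unfolding interval_cubes_def G by blast
    qed
  qed
qed

end
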